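(* Let $G$ be a graph, let $R\subseteq V(G)$ be the vertex set of an induced copy of $P_3$ in $G$, and let $C\subseteq V(G)\setminus R$ be a clique in $G$ with at most two vertices, each of odd degree in $G$. Assume every vertex of $R$ is adjacent to every vertex of $C$. Then one can admissibly remove from $G$ a subset of $C\cup R$ containing all of $C$, such that the remaining vertices of $R$ form a clique with at most two vertices, each of odd degree in the remaining graph.
   Context: $P_3$ denotes the path with three edges (four vertices). Removing a set $T$ of vertices from a graph $G$ is a simple admissible removal if $T$ is an independent set in $G$ and the number of edges between $T$ and $V(G)\setminus T$ is even. Removing a set of vertices is admissible if it can be realised by a sequence of simple admissible removals, each performed in the graph remaining after the previous ones. Degrees are always taken in the current remaining graph. *)

theory Defs
  imports Main
begin

text \<open>Removing vertices only shrinks the vertex set; the remaining graph is the induced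
subgraph on the remaining vertices.\<close>

definition simple_graph :: "'a set \<Rightarrow> ('a \<Rightarrow> 'a \<Rightarrow> bool) \<Rightarrow> bool" where
  "simple_graph V E \<longleftrightarrow> finite V \<and> (\<forall>x y. E x y \<longrightarrow> E y x) \<and> (\<forall>x. \<not> E x x)"

definition deg :: "'a set \<Rightarrow> ('a \<Rightarrow> 'a \<Rightarrow> bool) \<Rightarrow> 'a \<Rightarrow> nat" where
  "deg V E x = card {y \<in> V. E x y}"

definition clique :: "('a \<Rightarrow> 'a \<Rightarrow> bool) \<Rightarrow> 'a set \<Rightarrow> bool" where
  "clique E C \<longleftrightarrow> (\<forall>x\<in>C. \<forall>y\<in>C. x \<noteq> y \<longrightarrow> E x y)"

definition independent :: "('a \<Rightarrow> 'a \<Rightarrow> bool) \<Rightarrow> 'a set \<Rightarrow> bool" where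
  "independent E T \<longleftrightarrow> (\<forall>x\<in>T. \<forall>y\<in>T. \<not> E x y)"

text \<open>R is the vertex set of an induced path with three edges a-b-c-d.\<close>
definition induced_P3 :: "'a set \<Rightarrow> ('a \<Rightarrow> 'a \<Rightarrow> bool) \<Rightarrow> 'a set \<Rightarrow> bool" where
  "induced_P3 V E R \<longleftrightarrow> R \<subseteq> V \<and> (\<exists>a b c d. R = {a, b, c, d} \<and> distinct [a, b, c, d]
      \<and> E a b \<and> E b c \<and> E c d \<and> \<not> E a c \<and> \<not> E a d \<and> \<not> E b d)"

definition simple_admissible :: "'a set \<Rightarrow> ('a \<Rightarrow> 'a \<Rightarrow> bool) \<Rightarrow> 'a set \<Rightarrow> bool" where
  "simple_admissible V E T \<longleftrightarrow> T \<subseteq> V \<and> independent E T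
      \<and> even (card {(t, v). t \<in> T \<and> v \<in> V - T \<and> E t v})"

inductive admissible :: "'a set \<Rightarrow> ('a \<Rightarrow> 'a \<Rightarrow> bool) \<Rightarrow> 'a set \<Rightarrow> bool" where
  adm_empty: "admissible V E {}"
| adm_step: "simple_admissible V E T1 \<Longrightarrow> admissible (V - T1) E T2
      \<Longrightarrow> admissible V E (T1 \<union> T2)"

end

theory Submission
  imports Defs
begin

definition tf :: "('a \<Rightarrow> 'a \<Rightarrow> bool) \<Rightarrow> 'a set \<Rightarrow> bool" where
  "tf E R \<longleftrightarrow> (\<forall>u\<in>R. \<forall>v\<in>R. \<forall>w\<in>R. u \<noteq> v \<and> v \<noteq> w \<and> u \<noteq> w \<longrightarrow> \<not> (E u v \<and> E v w \<and> E u w))"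

definition good :: "'a set \<Rightarrow> ('a \<Rightarrow> 'a \<Rightarrow> bool) \<Rightarrow> 'a set \<Rightarrow> 'a set \<Rightarrow> bool" where
  "good V E R S \<longleftrightarrow> admissible V E S \<and> clique E (R - S) \<and> card (R - S) \<le> 2
     \<and> (\<forall>z\<in>R - S. odd (deg (V - S) E z))"

lemma sg_diff: "simple_graph V E \<Longrightarrow> simple_graph (V - T) E"
  by (simp add: simple_graph_def)

lemma deg_remove:
  assumes "finite V"
  shows "deg V E z = deg (V - {v}) E z + (if v \<in> V \<and> E z v then 1 else 0)"
proof -
  have e: "{y \<in> V - {v}. E z y} = {y \<in> V. E z y} - {v}" by auto
  have f: "finite {y \<in> V. E z y}" using assms by simp
  show ?thesis
  proof (cases "v \<in> V \<and> E z v")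
    case True
    then have "v \<in> {y \<in> V. E z y}" by simp
    then have "card {y \<in> V. E z y} \<ge> 1" using f
      by (metis One_nat_def Suc_leI card_gt_0_iff empty_iff)
    then show ?thesis unfolding deg_def e using True \<open>v \<in> _\<close> f by (simp add: card_Diff_singleton)
  next
    case False
    then have "{y \<in> V. E z y} - {v} = {y \<in> V. E z y}" by auto
    then show ?thesis unfolding deg_def e using False by simp
  qed
qed

lemma card_pairs:
  assumes "finite V" "T \<subseteq> V" "independent E T"
  shows "card {(t, v). t \<in> T \<and> v \<in> V - T \<and> E t v} = (\<Sum>t\<in>T. deg V E t)"
proof -
  have "{(t, v). t \<in> T \<and> v \<in> V - T \<and> E t v} = Sigma T (\<lambda>t. {v \<in> V. E t v})"
    using assms(3) unfolding independent_def by auto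
  moreover have "finite T" using assms finite_subset by auto
  ultimately show ?thesis using assms(1) by (simp add: card_SigmaI deg_def)
qed

lemma adm1:
  assumes "simple_graph V E" "v \<in> V" "even (deg V E v)" "admissible (V - {v}) E S"
  shows "admissible V E ({v} \<union> S)"
proof (rule adm_step[OF _ assms(4)])
  have "independent E {v}" using assms(1) by (simp add: independent_def simple_graph_def)
  moreover have "finite V" using assms(1) by (simp add: simple_graph_def)
  ultimately show "simple_admissible V E {v}"
    using assms card_pairs[of V "{v}" E] by (simp add: simple_admissible_def)
qed

lemma adm2:
  assumes "simple_graph V E" "u \<in> V" "w \<in> V" "u \<noteq> w" "\<not> E u w"
    "even (deg V E u + deg V E w)" "admissible (V - {u, w}) E S"
  shows "admissible V E ({u, w} \<union> S)"
proof (rule adm_step[OF _ assms(7)])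
  have "independent E {u, w}" using assms(1,5) by (auto simp add: independent_def simple_graph_def)
  moreover have "finite V" using assms(1) by (simp add: simple_graph_def)
  ultimately show "simple_admissible V E {u, w}"
    using assms card_pairs[of V "{u, w}" E] by (simp add: simple_admissible_def)
qed

lemma comp1:
  assumes "simple_graph V E" "v \<in> V" "even (deg V E v)" "good (V - {v}) E (R - {v}) S"
  shows "good V E R ({v} \<union> S)"
proof -
  have a: "R - ({v} \<union> S) = R - {v} - S" "V - ({v} \<union> S) = V - {v} - S" by auto
  show ?thesis using assms adm1[OF assms(1-3)] unfolding good_def a by simp
qed

lemma comp2:
  assumes "simple_graph V E" "u \<in> V" "w \<in> V" "u \<noteq> w" "\<not> E u w"
    "even (deg V E u + deg V E w)" "good (V - {u, w}) E (R - {u, w}) S"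
  shows "good V E R ({u, w} \<union> S)"
proof -
  have a: "R - ({u, w} \<union> S) = R - {u, w} - S" "V - ({u, w} \<union> S) = V - {u, w} - S" by auto
  show ?thesis using assms adm2[OF assms(1-6)] unfolding good_def a by simp
qed

lemma tf_sub: "tf E R \<Longrightarrow> R' \<subseteq> R \<Longrightarrow> tf E R'"
  unfolding tf_def by blast

lemma L0:
  assumes "simple_graph V E" "R \<subseteq> V" "tf E R"
  shows "\<exists>S\<subseteq>R. good V E R S"
  using assms
proof (induction "card R" arbitrary: V R rule: less_induct)
  case less
  have fV: "finite V" using less.prems(1) by (simp add: simple_graph_def)
  have fR: "finite R" using less.prems(2) fV finite_subset by auto
  show ?case
  proof (cases "clique E R \<and> card R \<le> 2 \<and> (\<forall>z\<in>R. odd (deg V E z))")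
    case True
    then show ?thesis by (intro exI[of _ "{}"]) (simp add: good_def adm_empty)
  next
    case False
    show ?thesis
    proof (cases "\<exists>v\<in>R. even (deg V E v)")
      case True
      then obtain v where v: "v \<in> R" "even (deg V E v)" by auto
      have "card (R - {v}) < card R" using v fR by (meson card_Diff1_less)
      then obtain S where S: "S \<subseteq> R - {v}" "good (V - {v}) E (R - {v}) S"
        using less.hyps[of "R - {v}" "V - {v}"] less.prems sg_diff tf_sub[of E R "R - {v}"]
        by blast
      have "good V E R ({v} \<union> S)"
        using comp1[OF less.prems(1) _ v(2) S(2)] v less.prems(2) by auto
      then show ?thesis using S v by (intro exI[of _ "{v} \<union> S"]) auto
    next
      case False2: False
      have "\<exists>u\<in>R. \<exists>w\<in>R. u \<noteq> w \<and> \<not> E u w"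
      proof (cases "clique E R")
        case True
        then have "card R \<ge> 3" using False False2 by auto
        then obtain u v w where "u \<in> R" "v \<in> R" "w \<in> R" "u \<noteq> v" "v \<noteq> w" "u \<noteq> w"
          by (metis card_3_iff card_le_Suc_iff numeral_3_eq_3 insert_subset obtain_subset_with_card_n)
        then show ?thesis using less.prems(3) unfolding tf_def by metis
      next
        case False
        then show ?thesis unfolding clique_def by blast
      qed
      then obtain u w where uw: "u \<in> R" "w \<in> R" "u \<noteq> w" "\<not> E u w" by blast
      have ev: "even (deg V E u + deg V E w)" using False2 uw by auto
      have "card (R - {u, w}) < card R" using uw fR
        by (metis Diff_insert card_Diff1_less card_Diff2_less)
      then obtain S where S: "S \<subseteq> R - {u, w}" "good (V - {u, w}) E (R - {u, w}) S"
        using less.hyps[of "R - {u, w}" "V - {u, w}"] less.prems sg_diff tf_sub[of E R "R - {u, w}"]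
        by blast
      have "good V E R ({u, w} \<union> S)"
        using comp2[OF less.prems(1) _ _ uw(3,4) ev S(2)] uw less.prems(2) by auto
      then show ?thesis using S uw by (intro exI[of _ "{u, w} \<union> S"]) auto
    qed
  qed
qed


lemma L1:
  assumes sg: "simple_graph V E" and RV: "R \<subseteq> V" and t: "tf E R" and x: "x \<in> V" "x \<notin> R"
    and xo: "odd (deg V E x)" and xj: "\<forall>r\<in>R. E x r" and r: "r \<in> R" "even (deg V E r)"
  shows "\<exists>S. {x} \<subseteq> S \<and> S \<subseteq> {x} \<union> R \<and> good V E R S"
proof -
  have fV: "finite V" using sg by (simp add: simple_graph_def)
  have rV: "r \<in> V" using r RV by auto
  have "deg V E x = deg (V - {r}) E x + 1" using deg_remove[OF fV, of E x r] rV xj r by simp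
  then have xe: "even (deg (V - {r}) E x)" using xo by simp
  obtain S where S: "S \<subseteq> R - {r} - {x}" "good (V - {r} - {x}) E (R - {r} - {x}) S"
  proof -
    have a: "R - {r} - {x} \<subseteq> V - {r} - {x}" using RV by auto
    have b: "tf E (R - {r} - {x})" by (rule tf_sub[OF t]) blast
    have "simple_graph (V - {r} - {x}) E" using sg by (simp add: simple_graph_def)
    from L0[OF this a b] obtain S0 where "S0 \<subseteq> R - {r} - {x}" "good (V - {r} - {x}) E (R - {r} - {x}) S0"
      by blast
    then show ?thesis by (rule that)
  qed
  have xV1: "x \<in> V - {r}" using x r by blast
  have "good (V - {r}) E (R - {r}) ({x} \<union> S)"
    by (rule comp1[OF sg_diff[OF sg] xV1 xe S(2)])
  then have g: "good V E R ({r} \<union> ({x} \<union> S))" by (rule comp1[OF sg rV r(2)])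
  have "{x} \<subseteq> {r} \<union> ({x} \<union> S)" "{r} \<union> ({x} \<union> S) \<subseteq> {x} \<union> R" using S r by blast+
  then show ?thesis using g by blast
qed

lemma L2:
  assumes sg: "simple_graph V E" and RV: "R \<subseteq> V" and t: "tf E R" and x: "x \<in> V" "x \<notin> R"
    and y: "y \<in> V" "y \<notin> R" "x \<noteq> y" "E x y"
    and xo: "odd (deg V E x)" and xj: "\<forall>r\<in>R. E x r"
    and yo: "odd (deg V E y)" and yj: "\<forall>r\<in>R. E y r"
    and r: "r \<in> R" "even (deg V E r)" and s: "s \<in> R" "s \<noteq> r"
    and sc: "odd (deg V E s + (if E s r then 1 else 0))"
  shows "\<exists>S. {x, y} \<subseteq> S \<and> S \<subseteq> {x, y} \<union> R \<and> good V E R S"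
proof -
  have fV: "finite V" using sg by (simp add: simple_graph_def)
  have sym: "\<And>u v. E u v \<Longrightarrow> E v u" using sg by (simp add: simple_graph_def)
  have rV: "r \<in> V" using r RV by auto
  have "deg V E y = deg (V - {r}) E y + 1" using deg_remove[OF fV, of E y r] rV yj r by simp
  then have ye: "even (deg (V - {r}) E y)" using yo by simp
  have fV1: "finite (V - {r})" using fV by simp
  have "deg V E x = deg (V - {r}) E x + 1" using deg_remove[OF fV, of E x r] rV xj r by simp
  moreover have "deg (V - {r}) E x = deg (V - {r} - {y}) E x + 1"
    using deg_remove[OF fV1, of E x y] y r by auto
  ultimately have xo2: "odd (deg (V - {r} - {y}) E x)" using xo by simp
  have "deg V E s = deg (V - {r}) E s + (if E s r then 1 else 0)"
    using deg_remove[OF fV, of E s r] rV by simp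
  moreover have "deg (V - {r}) E s = deg (V - {r} - {y}) E s + 1"
  proof -
    have "E s y" using sym yj s by blast
    then show ?thesis using deg_remove[OF fV1, of E s y] y r by auto
  qed
  ultimately have se: "even (deg (V - {r} - {y}) E s)" using sc by (cases "E s r") auto
  obtain S where S: "{x} \<subseteq> S" "S \<subseteq> {x} \<union> (R - {r} - {y})" "good (V - {r} - {y}) E (R - {r} - {y}) S"
  proof -
    have a: "R - {r} - {y} \<subseteq> V - {r} - {y}" using RV by auto
    have b: "tf E (R - {r} - {y})" by (rule tf_sub[OF t]) blast
    have c: "x \<in> V - {r} - {y}" "x \<notin> R - {r} - {y}" using x y r by auto
    have d: "\<forall>q\<in>R - {r} - {y}. E x q" using xj by blast
    have e: "s \<in> R - {r} - {y}" using s y by auto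
    from L1[OF sg_diff[OF sg_diff[OF sg]] a b c xo2 d e se] obtain S0 where
      "{x} \<subseteq> S0" "S0 \<subseteq> {x} \<union> (R - {r} - {y})" "good (V - {r} - {y}) E (R - {r} - {y}) S0"
      by blast
    then show ?thesis by (rule that)
  qed
  have yV1: "y \<in> V - {r}" using y r by blast
  have "good (V - {r}) E (R - {r}) ({y} \<union> S)"
    by (rule comp1[OF sg_diff[OF sg] yV1 ye S(3)])
  then have g: "good V E R ({r} \<union> ({y} \<union> S))" by (rule comp1[OF sg rV r(2)])
  have "{x, y} \<subseteq> {r} \<union> ({y} \<union> S)" "{r} \<union> ({y} \<union> S) \<subseteq> {x, y} \<union> R" using S r by blast+
  then show ?thesis using g by blast
qed


lemma deg_remove2:
  assumes "finite V" "u \<noteq> w"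
  shows "deg V E z = deg (V - {u, w}) E z + (if u \<in> V \<and> E z u then 1 else 0)
           + (if w \<in> V \<and> E z w then 1 else 0)"
proof -
  have e: "V - {u} - {w} = V - {u, w}" by auto
  have "deg V E z = deg (V - {u}) E z + (if u \<in> V \<and> E z u then 1 else 0)"
    by (rule deg_remove[OF assms(1)])
  moreover have "deg (V - {u}) E z = deg (V - {u} - {w}) E z + (if w \<in> V - {u} \<and> E z w then 1 else 0)"
    by (rule deg_remove) (use assms in simp)
  ultimately show ?thesis using assms(2) unfolding e by simp
qed

lemma card_le2_cases:
  assumes "finite C" "card C \<le> 2"
  shows "C = {} \<or> (\<exists>x. C = {x}) \<or> (\<exists>x y. x \<noteq> y \<and> C = {x, y})"
proof -
  have "card C = 0 \<or> card C = 1 \<or> card C = 2" using assms(2) by linarith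
  then show ?thesis using assms(1) by (auto simp: card_1_singleton_iff card_2_iff)
qed

theorem mainTheorem20:
  fixes V :: "'a set" and E :: "'a \<Rightarrow> 'a \<Rightarrow> bool" and R C :: "'a set"
  assumes "simple_graph V E"
    and "induced_P3 V E R"
    and "C \<subseteq> V - R" and "clique E C" and "card C \<le> 2"
    and "\<forall>x\<in>C. odd (deg V E x)"
    and "\<forall>r\<in>R. \<forall>c\<in>C. E r c"
  shows "\<exists>S. C \<subseteq> S \<and> S \<subseteq> C \<union> R \<and> admissible V E S
           \<and> clique E (R - S) \<and> card (R - S) \<le> 2
           \<and> (\<forall>x\<in>R - S. odd (deg (V - S) E x))"
proof -
  note sg = assms(1)
  have fV: "finite V" using sg by (simp add: simple_graph_def)
  have sym: "\<And>u v. E u v \<Longrightarrow> E v u" using sg by (simp add: simple_graph_def)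
  have RV: "R \<subseteq> V" using assms(2) by (simp add: induced_P3_def)
  obtain a b c d where R: "R = {a, b, c, d}" and dist: "distinct [a, b, c, d]"
    and e1: "E a b" "E b c" "E c d" and n1: "\<not> E a c" "\<not> E a d" "\<not> E b d"
    using assms(2) unfolding induced_P3_def by blast
  have e2: "E b a" "E c b" "E d c" using e1 sym by blast+
  have n2: "\<not> E c a" "\<not> E d a" "\<not> E d b" using n1 sym by blast+
  note adj = e1 e2 n1 n2
  have t: "tf E R" unfolding tf_def R using adj dist by auto
  have fC: "finite C" using assms(3) fV finite_subset by blast
  have ggoal: "?thesis" if "C \<subseteq> S" "S \<subseteq> C \<union> R" "good V E R S" for S
    using that unfolding good_def by blast
  have abcdV: "a \<in> V" "b \<in> V" "c \<in> V" "d \<in> V" using RV R by auto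
  consider "C = {}" | x where "C = {x}" | x y where "x \<noteq> y" "C = {x, y}"
    using card_le2_cases[OF fC assms(5)] by blast
  then show ?thesis
  proof cases
    case 1
    from L0[OF sg RV t] obtain S where "S \<subseteq> R" "good V E R S" by blast
    then show ?thesis using ggoal 1 by blast
  next
    case 2
    have x: "x \<in> V" "x \<notin> R" using assms(3) 2 by auto
    have xo: "odd (deg V E x)" using assms(6) 2 by auto
    have xj: "\<forall>r\<in>R. E x r" using assms(7) 2 sym by blast
    show ?thesis
    proof (cases "\<exists>r\<in>R. even (deg V E r)")
      case True
      then obtain r where r: "r \<in> R" "even (deg V E r)" by blast
      from L1[OF sg RV t x xo xj r] obtain S where
        "{x} \<subseteq> S" "S \<subseteq> {x} \<union> R" "good V E R S" by blast
      then show ?thesis using ggoal 2 by blast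
    next
      case False
      then have od: "odd (deg V E a)" "odd (deg V E b)" "odd (deg V E c)" "odd (deg V E d)"
        using R by auto
      have ac: "a \<noteq> c" using dist by auto
      have xa: "E x a" "E x c" using xj R by auto
      have "deg V E x = deg (V - {a, c}) E x + 2"
        using deg_remove2[OF fV ac, of E x] abcdV xa by simp
      then have xo1: "odd (deg (V - {a, c}) E x)" using xo by simp
      have "deg V E d = deg (V - {a, c}) E d + 1"
        using deg_remove2[OF fV ac, of E d] abcdV adj by simp
      then have de: "even (deg (V - {a, c}) E d)" using od by simp
      have Req: "R - {a, c} = {b, d}" using R dist by auto
      have s1: "{b, d} \<subseteq> V - {a, c}" using abcdV dist by auto
      have s2: "tf E {b, d}" by (rule tf_sub[OF t]) (auto simp: R)
      have s3: "x \<in> V - {a, c}" "x \<notin> {b, d}" using x R by auto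
      have s4: "\<forall>r\<in>{b, d}. E x r" using xj R by auto
      have s5: "d \<in> {b, d}" by simp
      from L1[OF sg_diff[OF sg] s1 s2 s3 xo1 s4 s5 de] obtain S where
        S: "{x} \<subseteq> S" "S \<subseteq> {x} \<union> {b, d}" "good (V - {a, c}) E {b, d} S" by blast
      have ev: "even (deg V E a + deg V E c)" using od by simp
      have "good V E R ({a, c} \<union> S)"
        using comp2[OF sg abcdV(1) abcdV(3) ac n1(1) ev] S(3) Req by simp
      moreover have "C \<subseteq> {a, c} \<union> S" "{a, c} \<union> S \<subseteq> C \<union> R" using S 2 R by auto
      ultimately show ?thesis using ggoal by blast
    qed
  next
    case 3
    have x: "x \<in> V" "x \<notin> R" "y \<in> V" "y \<notin> R" using assms(3) 3 by auto
    have xy: "E x y" using assms(4) 3 unfolding clique_def by auto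
    have xo: "odd (deg V E x)" "odd (deg V E y)" using assms(6) 3 by auto
    have xj: "\<forall>r\<in>R. E x r" "\<forall>r\<in>R. E y r" using assms(7) 3 sym by blast+
    show ?thesis
    proof (cases "\<exists>r\<in>R. even (deg V E r)")
      case True
      have "\<exists>r\<in>R. \<exists>s\<in>R. even (deg V E r) \<and> s \<noteq> r \<and> odd (deg V E s + (if E s r then 1 else 0))"
        using True unfolding R using dist adj
        by (cases "even (deg V E a)"; cases "even (deg V E b)"; cases "even (deg V E c)";
            cases "even (deg V E d)"; auto)
      then obtain r s where r: "r \<in> R" "s \<in> R" "even (deg V E r)" "s \<noteq> r"
        "odd (deg V E s + (if E s r then 1 else 0))" by blast
      from L2[OF sg RV t x(1,2) x(3,4) 3(1) xy xo(1) xj(1) xo(2) xj(2) r(1) r(3) r(2) r(4) r(5)]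
      obtain S where "{x, y} \<subseteq> S" "S \<subseteq> {x, y} \<union> R" "good V E R S" by blast
      then show ?thesis using ggoal 3 by blast
    next
      case False
      then have od: "odd (deg V E a)" "odd (deg V E b)" "odd (deg V E c)" "odd (deg V E d)"
        using R by auto
      have ad: "a \<noteq> d" using dist by auto
      have xa: "E x a" "E x d" "E y a" "E y d" using xj R by auto
      have "deg V E x = deg (V - {a, d}) E x + 2"
        using deg_remove2[OF fV ad, of E x] abcdV xa by simp
      then have xo1: "odd (deg (V - {a, d}) E x)" using xo by simp
      have "deg V E y = deg (V - {a, d}) E y + 2"
        using deg_remove2[OF fV ad, of E y] abcdV xa by simp
      then have yo1: "odd (deg (V - {a, d}) E y)" using xo by simp
      have "deg V E b = deg (V - {a, d}) E b + 1"
        using deg_remove2[OF fV ad, of E b] abcdV adj by simp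
      then have be: "even (deg (V - {a, d}) E b)" using od by simp
      have "deg V E c = deg (V - {a, d}) E c + 1"
        using deg_remove2[OF fV ad, of E c] abcdV adj by simp
      then have ce: "odd (deg (V - {a, d}) E c + (if E c b then 1 else 0))" using od adj by simp
      have Req: "R - {a, d} = {b, c}" using R dist by auto
      have s1: "{b, c} \<subseteq> V - {a, d}" using abcdV dist by auto
      have s2: "tf E {b, c}" by (rule tf_sub[OF t]) (auto simp: R)
      have s3: "x \<in> V - {a, d}" "x \<notin> {b, c}" "y \<in> V - {a, d}" "y \<notin> {b, c}" using x R by auto
      have s4: "\<forall>r\<in>{b, c}. E x r" "\<forall>r\<in>{b, c}. E y r" using xj R by auto
      have s5: "b \<in> {b, c}" "c \<in> {b, c}" "c \<noteq> b" using dist by auto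
      from L2[OF sg_diff[OF sg] s1 s2 s3(1,2) s3(3,4) 3(1) xy xo1 s4(1) yo1 s4(2) s5(1) be s5(2,3) ce]
      obtain S where S: "{x, y} \<subseteq> S" "S \<subseteq> {x, y} \<union> {b, c}" "good (V - {a, d}) E {b, c} S" by blast
      have ev: "even (deg V E a + deg V E d)" using od by simp
      have "good V E R ({a, d} \<union> S)"
        using comp2[OF sg abcdV(1) abcdV(4) ad n1(2) ev] S(3) Req by simp
      moreover have "C \<subseteq> {a, d} \<union> S" "{a, d} \<union> S \<subseteq> C \<union> R" using S 3 R by auto
      ultimately show ?thesis using ggoal by blast
    qed
  qed
qed

end
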